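(* In generalized non-signalling theory (box world), consider a system of boxes each of which has at least two possible outputs. Let $(\mathbf{a}_1,\mathbf{x}_1)$ and $(\mathbf{a}_2,\mathbf{x}_2)$ be output-input pairs of the system such that it is not the case that both $\mathbf{a}_1=\mathbf{a}_2$ and $\mathbf{x}_1=\mathbf{x}_2$. Then there exists an allowed state $\mathbf{p}$ with $p(\mathbf{a}_1|\mathbf{x}_1)=0$ and $p(\mathbf{a}_2|\mathbf{x}_2)>0$.
   Context: Box world (GNST): a box has a finite set of inputs and outputs. A system of $n$ boxes has as allowed states all collections $p(\mathbf{a}|\mathbf{x})=p(a_1,\ldots,a_n|x_1,\ldots,x_n)\ge0$ that are normalized ($\sum_{\mathbf{a}}p(\mathbf{a}|\mathbf{x})=1$ for all $\mathbf{x}$) and no-signalling (for each $i$, $\sum_{a_i}p(\mathbf{a}|\mathbf{x})$ is independent of $x_i$). An output-input pair is a pair $(\mathbf{a},\mathbf{x})$ of an output tuple and an input tuple. *)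

theory Defs
  imports Complex_Main "HOL-Library.FuncSet"
begin

definition out_tuples :: "nat \<Rightarrow> (nat \<Rightarrow> 'a set) \<Rightarrow> (nat \<Rightarrow> 'a) set" where
  "out_tuples n A = PiE {..<n} A"

definition in_tuples :: "nat \<Rightarrow> (nat \<Rightarrow> 'x set) \<Rightarrow> (nat \<Rightarrow> 'x) set" where
  "in_tuples n X = PiE {..<n} X"

text \<open>Allowed states of box world: nonnegative, normalised, no-signalling.
No-signalling: for each box i, the marginal obtained by summing over a_i
does not depend on x_i (given the other inputs).\<close>

definition allowed_state ::
  "nat \<Rightarrow> (nat \<Rightarrow> 'a set) \<Rightarrow> (nat \<Rightarrow> 'x set) \<Rightarrow> ((nat \<Rightarrow> 'a) \<Rightarrow> (nat \<Rightarrow> 'x) \<Rightarrow> real) \<Rightarrow> bool" where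
  "allowed_state n A X p \<longleftrightarrow>
     (\<forall>a\<in>out_tuples n A. \<forall>x\<in>in_tuples n X. p a x \<ge> 0) \<and>
     (\<forall>x\<in>in_tuples n X. (\<Sum>a\<in>out_tuples n A. p a x) = 1) \<and>
     (\<forall>i<n. \<forall>x\<in>in_tuples n X. \<forall>x'\<in>in_tuples n X.
        (\<forall>j<n. j \<noteq> i \<longrightarrow> x j = x' j) \<longrightarrow>
        (\<forall>a\<in>out_tuples n A.
           (\<Sum>b\<in>A i. p (a(i := b)) x) = (\<Sum>b\<in>A i. p (a(i := b)) x')))"

end

theory Submission
  imports Defs
begin

definition detf :: "nat \<Rightarrow> (nat \<Rightarrow> 'x \<Rightarrow> 'a) \<Rightarrow> (nat \<Rightarrow> 'x) \<Rightarrow> (nat \<Rightarrow> 'a)" where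
  "detf n g x = (\<lambda>j. if j < n then g j (x j) else undefined)"

lemma det_allowed:
  assumes fin: "\<And>i. i < n \<Longrightarrow> finite (A i)"
    and g: "\<And>j y. j < n \<Longrightarrow> g j y \<in> A j"
  shows "allowed_state n A X (\<lambda>a x. if a = detf n g x then 1 else 0)"
  unfolding allowed_state_def
proof (intro conjI ballI allI impI)
  fix x assume "x \<in> in_tuples n X"
  have mem: "detf n g x \<in> out_tuples n A"
    using g by (auto simp: out_tuples_def detf_def PiE_def extensional_def)
  have "finite (out_tuples n A)"
    unfolding out_tuples_def by (rule finite_PiE) (auto simp: fin)
  then show "(\<Sum>a\<in>out_tuples n A. if a = detf n g x then 1 else 0) = (1::real)"
    using mem by (simp add: sum.delta')
next
  fix i x x' a
  assume i: "i < n" and x: "x \<in> in_tuples n X" and x': "x' \<in> in_tuples n X"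
    and agree: "\<forall>j<n. j \<noteq> i \<longrightarrow> x j = x' j" and a: "a \<in> out_tuples n A"
  have key: "\<And>y. (\<Sum>b\<in>A i. if a(i := b) = detf n g y then 1 else 0) =
      (if (\<forall>j. j \<noteq> i \<longrightarrow> a j = detf n g y j) then 1 else (0::real))"
  proof -
    fix y
    have "\<And>b. (a(i := b) = detf n g y) = (b = detf n g y i \<and> (\<forall>j. j \<noteq> i \<longrightarrow> a j = detf n g y j))"
      by (auto simp: fun_eq_iff)
    then have "(\<Sum>b\<in>A i. if a(i := b) = detf n g y then 1 else 0) =
        (\<Sum>b\<in>A i. if b = detf n g y i then (if (\<forall>j. j \<noteq> i \<longrightarrow> a j = detf n g y j) then 1 else 0) else (0::real))"
      by (intro sum.cong) auto
    also have "\<dots> = (if (\<forall>j. j \<noteq> i \<longrightarrow> a j = detf n g y j) then 1 else 0)"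
      using fin[OF i] g[OF i] by (simp add: sum.delta' detf_def i)
    finally show "?thesis y" .
  qed
  have "(\<forall>j. j \<noteq> i \<longrightarrow> a j = detf n g x j) = (\<forall>j. j \<noteq> i \<longrightarrow> a j = detf n g x' j)"
    using agree by (auto simp: detf_def)
  then show "(\<Sum>b\<in>A i. (\<lambda>a x. if a = detf n g x then 1 else (0::real)) (a(i := b)) x) =
       (\<Sum>b\<in>A i. (\<lambda>a x. if a = detf n g x then 1 else (0::real)) (a(i := b)) x')"
    using key[of x] key[of x'] by simp
qed simp

theorem lemma8:
  fixes n :: nat and A :: "nat \<Rightarrow> 'a set" and X :: "nat \<Rightarrow> 'x set"
    and a1 a2 :: "nat \<Rightarrow> 'a" and x1 x2 :: "nat \<Rightarrow> 'x"
  assumes "\<And>i. i < n \<Longrightarrow> finite (A i)"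
    and "\<And>i. i < n \<Longrightarrow> finite (X i)"
    and "\<And>i. i < n \<Longrightarrow> card (A i) \<ge> 2"
    and "a1 \<in> out_tuples n A" and "a2 \<in> out_tuples n A"
    and "x1 \<in> in_tuples n X" and "x2 \<in> in_tuples n X"
    and "\<not> (a1 = a2 \<and> x1 = x2)"
  shows "\<exists>p. allowed_state n A X p \<and> p a1 x1 = 0 \<and> p a2 x2 > 0"
proof (cases "a1 = a2")
  case False
  define g where "g = (\<lambda>(j::nat) (y::'x). a2 j)"
  have g: "\<And>j y. j < n \<Longrightarrow> g j y \<in> A j" using assms(5)
    by (auto simp: g_def out_tuples_def)
  have e: "\<And>x. detf n g x = a2" using assms(5)
    by (auto simp: detf_def g_def out_tuples_def fun_eq_iff PiE_def extensional_def)
  show ?thesis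
    by (rule exI[of _ "\<lambda>a x. if a = detf n g x then 1 else 0"])
       (use det_allowed[of n A g X, OF assms(1) g] e False in simp)
next
  case True
  then have "x1 \<noteq> x2" using assms(8) by auto
  then obtain i where i: "i < n" "x1 i \<noteq> x2 i"
  proof -
    obtain k where k: "x1 k \<noteq> x2 k" using \<open>x1 \<noteq> x2\<close> by (auto simp: fun_eq_iff)
    have "k < n"
    proof (rule ccontr)
      assume "\<not> k < n"
      then have "x1 k = undefined" "x2 k = undefined"
        using assms(6,7) by (auto simp: in_tuples_def PiE_def extensional_def)
      then show False using k by simp
    qed
    then show ?thesis using k that by blast
  qed
  have "card (A i) \<ge> 2" using assms(3) i by auto
  have "\<exists>b\<in>A i. b \<noteq> a2 i"
  proof (rule ccontr)
    assume "\<not> ?thesis"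
    then have "A i \<subseteq> {a2 i}" by auto
    then have "card (A i) \<le> card {a2 i}" by (rule card_mono[rotated]) simp
    then show False using \<open>card (A i) \<ge> 2\<close> by simp
  qed
  then obtain b where b: "b \<in> A i" "b \<noteq> a2 i" by blast
  define g where "g = (\<lambda>(j::nat) (y::'x). if j = i \<and> y \<noteq> x2 i then b else a2 j)"
  have g: "\<And>j y. j < n \<Longrightarrow> g j y \<in> A j" using assms(5) b
    by (auto simp: g_def out_tuples_def)
  have e2: "detf n g x2 = a2" using assms(5)
    by (auto simp: detf_def g_def out_tuples_def fun_eq_iff PiE_def extensional_def)
  have e1: "detf n g x1 \<noteq> a1"
  proof
    assume "detf n g x1 = a1"
    then have "detf n g x1 i = a1 i" by simp
    then show False using i b True by (simp add: detf_def g_def)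
  qed
  show ?thesis
    by (rule exI[of _ "\<lambda>a x. if a = detf n g x then 1 else 0"])
       (use det_allowed[of n A g X, OF assms(1) g] e1 e2 in simp)
qed

end
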